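(* Let $i:\mathbb{A}\to\mathbb{B}$ be a virtual double functor which is fully faithful, injective on objects, and injective on loose arrows. Then $i$ is the equalizer of its cokernel pair $q_1,q_2:\mathbb{B}\rightrightarrows\mathbb{B}\cup_{\mathbb{A}}\mathbb{B}$; in particular $i$ is a regular monomorphism.
   Context: A virtual double category (VDC) has objects, tight arrows forming a category, loose arrows, and $n$-ary multicells from a composable path of $n$ loose arrows to a loose arrow with two tight sides, with identities and associative unital composition; a virtual double functor (VDF) preserves all structure strictly, and the category of VDCs and VDFs is cocomplete. A VDF $i:\mathbb{A}\to\mathbb{B}$ is fully faithful if it is fully faithful on underlying tight categories and, for every path $\varphi$ of loose arrows and loose arrow $\psi$ of $\mathbb{A}$, the induced map from multicells of $\mathbb{A}$ with loose source $\varphi$ and target $\psi$ to multicells of $\mathbb{B}$ with loose source $i(\varphi)$ and target $i(\psi)$ is a bijection. The cokernel pair is the pair of coprojections of the pushout $\mathbb{B}\cup_{\mathbb{A}}\mathbb{B}$ of $i$ along itself. *)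

theory Defs
  imports Main
begin

text \<open>A virtual double category with objects of type 'o, tight arrows 't,
loose arrows 'l and multicells 'c.  Carriers are explicit sets; all
operations are total functions that are only meaningful on the carriers.
  tcomp g f  is the tight composite  g after f.
  A multicell c has loose source path csrc c (a list of composable loose
  arrows), loose target ctgt c, left tight side cleft c and right tight side
  cright c.  The source path runs from tdom (cleft c) to tdom (cright c);
  the target runs from tcod (cleft c) to tcod (cright c).
  ccomp a f bs  composes a cell a with a path of cells (f, bs): bs is a
  list of cells whose targets form the source of a, and f is the leftmost
  tight arrow of the path (for a nullary a the cell path is just the tight
  arrow f, as in the fc-multicategory formulation).\<close>

record ('o, 't, 'l, 'c) vdc =
  Ob :: "'o set"
  Tt :: "'t set"
  tdom :: "'t \<Rightarrow> 'o"
  tcod :: "'t \<Rightarrow> 'o"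
  tid :: "'o \<Rightarrow> 't"
  tcomp :: "'t \<Rightarrow> 't \<Rightarrow> 't"
  Lo :: "'l set"
  lsrc :: "'l \<Rightarrow> 'o"
  ltgt :: "'l \<Rightarrow> 'o"
  Ce :: "'c set"
  csrc :: "'c \<Rightarrow> 'l list"
  ctgt :: "'c \<Rightarrow> 'l"
  cleft :: "'c \<Rightarrow> 't"
  cright :: "'c \<Rightarrow> 't"
  cid :: "'l \<Rightarrow> 'c"
  ccomp :: "'c \<Rightarrow> 't \<Rightarrow> 'c list \<Rightarrow> 'c"

fun lpath :: "('o, 't, 'l, 'c) vdc \<Rightarrow> 'o \<Rightarrow> 'l list \<Rightarrow> 'o \<Rightarrow> bool" where
  "lpath V a [] b = (a \<in> Ob V \<and> a = b)"
| "lpath V a (p # ps) b = (p \<in> Lo V \<and> lsrc V p = a \<and> lpath V (ltgt V p) ps b)"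

fun cpath :: "('o, 't, 'l, 'c) vdc \<Rightarrow> 't \<Rightarrow> 'c list \<Rightarrow> 't \<Rightarrow> bool" where
  "cpath V f [] g = (f \<in> Tt V \<and> g = f)"
| "cpath V f (b # bs) g = (b \<in> Ce V \<and> cleft V b = f \<and> cpath V (cright V b) bs g)"

definition pright :: "('o, 't, 'l, 'c) vdc \<Rightarrow> 't \<Rightarrow> 'c list \<Rightarrow> 't" where
  "pright V f bs = (if bs = [] then f else cright V (last bs))"

definition composable :: "('o, 't, 'l, 'c) vdc \<Rightarrow> 'c \<Rightarrow> 't \<Rightarrow> 'c list \<Rightarrow> bool" where
  "composable V a f bs \<longleftrightarrow>
     a \<in> Ce V \<and> cpath V f bs (pright V f bs) \<and> map (ctgt V) bs = csrc V a \<and>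
     tcod V f = tdom V (cleft V a) \<and> tcod V (pright V f bs) = tdom V (cright V a)"

fun pcomp :: "('o, 't, 'l, 'c) vdc \<Rightarrow> 'c list \<Rightarrow> 't \<Rightarrow> 'c list \<Rightarrow> 'c list" where
  "pcomp V [] g cs = []"
| "pcomp V (b # bs) g cs =
     (let k = length (csrc V b); ch = take k cs in
      ccomp V b g ch # pcomp V bs (pright V g ch) (drop k cs))"

fun pcompat :: "('o, 't, 'l, 'c) vdc \<Rightarrow> 'c list \<Rightarrow> 't \<Rightarrow> 'c list \<Rightarrow> bool" where
  "pcompat V [] g cs = (cs = [])"
| "pcompat V (b # bs) g cs =
     (let k = length (csrc V b); ch = take k cs in
      k \<le> length cs \<and> composable V b g ch \<and> pcompat V bs (pright V g ch) (drop k cs))"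

definition is_vdc :: "('o, 't, 'l, 'c) vdc \<Rightarrow> bool" where
  "is_vdc V \<longleftrightarrow>
    \<comment> \<open>tight category\<close>
    (\<forall>f \<in> Tt V. tdom V f \<in> Ob V \<and> tcod V f \<in> Ob V) \<and>
    (\<forall>a \<in> Ob V. tid V a \<in> Tt V \<and> tdom V (tid V a) = a \<and> tcod V (tid V a) = a) \<and>
    (\<forall>f \<in> Tt V. \<forall>g \<in> Tt V. tcod V f = tdom V g \<longrightarrow>
        tcomp V g f \<in> Tt V \<and> tdom V (tcomp V g f) = tdom V f \<and> tcod V (tcomp V g f) = tcod V g) \<and>
    (\<forall>f \<in> Tt V. tcomp V f (tid V (tdom V f)) = f \<and> tcomp V (tid V (tcod V f)) f = f) \<and>
    (\<forall>f \<in> Tt V. \<forall>g \<in> Tt V. \<forall>h \<in> Tt V. tcod V f = tdom V g \<longrightarrow> tcod V g = tdom V h \<longrightarrow>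
        tcomp V h (tcomp V g f) = tcomp V (tcomp V h g) f) \<and>
    \<comment> \<open>loose arrows\<close>
    (\<forall>p \<in> Lo V. lsrc V p \<in> Ob V \<and> ltgt V p \<in> Ob V) \<and>
    \<comment> \<open>boundaries of multicells\<close>
    (\<forall>c \<in> Ce V. cleft V c \<in> Tt V \<and> cright V c \<in> Tt V \<and>
        lpath V (tdom V (cleft V c)) (csrc V c) (tdom V (cright V c)) \<and>
        ctgt V c \<in> Lo V \<and> lsrc V (ctgt V c) = tcod V (cleft V c) \<and>
        ltgt V (ctgt V c) = tcod V (cright V c)) \<and>
    \<comment> \<open>identity cells\<close>
    (\<forall>p \<in> Lo V. cid V p \<in> Ce V \<and> csrc V (cid V p) = [p] \<and> ctgt V (cid V p) = p \<and>
        cleft V (cid V p) = tid V (lsrc V p) \<and> cright V (cid V p) = tid V (ltgt V p)) \<and>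
    \<comment> \<open>composition of multicells\<close>
    (\<forall>a f bs. composable V a f bs \<longrightarrow>
        ccomp V a f bs \<in> Ce V \<and>
        csrc V (ccomp V a f bs) = concat (map (csrc V) bs) \<and>
        ctgt V (ccomp V a f bs) = ctgt V a \<and>
        cleft V (ccomp V a f bs) = tcomp V (cleft V a) f \<and>
        cright V (ccomp V a f bs) = tcomp V (cright V a) (pright V f bs)) \<and>
    \<comment> \<open>unit laws\<close>
    (\<forall>a \<in> Ce V. ccomp V a (tid V (tdom V (cleft V a))) (map (cid V) (csrc V a)) = a) \<and>
    (\<forall>b \<in> Ce V. ccomp V (cid V (ctgt V b)) (cleft V b) [b] = b) \<and>
    \<comment> \<open>associativity\<close>
    (\<forall>a f bs g cs. composable V a f bs \<longrightarrow> pcompat V bs g cs \<longrightarrow>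
        composable V (ccomp V a f bs) g cs \<longrightarrow>
        ccomp V (ccomp V a f bs) g cs = ccomp V a (tcomp V f g) (pcomp V bs g cs))"

record ('ao, 'at, 'al, 'ac, 'bo, 'bt, 'bl, 'bc) vdf =
  fo :: "'ao \<Rightarrow> 'bo"
  ft :: "'at \<Rightarrow> 'bt"
  fl :: "'al \<Rightarrow> 'bl"
  fc :: "'ac \<Rightarrow> 'bc"

definition is_vdf ::
  "('ao, 'at, 'al, 'ac) vdc \<Rightarrow> ('bo, 'bt, 'bl, 'bc) vdc \<Rightarrow>
   ('ao, 'at, 'al, 'ac, 'bo, 'bt, 'bl, 'bc) vdf \<Rightarrow> bool" where
  "is_vdf A B F \<longleftrightarrow> is_vdc A \<and> is_vdc B \<and>
    (\<forall>a \<in> Ob A. fo F a \<in> Ob B) \<and>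
    (\<forall>f \<in> Tt A. ft F f \<in> Tt B \<and> tdom B (ft F f) = fo F (tdom A f) \<and> tcod B (ft F f) = fo F (tcod A f)) \<and>
    (\<forall>a \<in> Ob A. ft F (tid A a) = tid B (fo F a)) \<and>
    (\<forall>f \<in> Tt A. \<forall>g \<in> Tt A. tcod A f = tdom A g \<longrightarrow> ft F (tcomp A g f) = tcomp B (ft F g) (ft F f)) \<and>
    (\<forall>p \<in> Lo A. fl F p \<in> Lo B \<and> lsrc B (fl F p) = fo F (lsrc A p) \<and> ltgt B (fl F p) = fo F (ltgt A p)) \<and>
    (\<forall>c \<in> Ce A. fc F c \<in> Ce B \<and> csrc B (fc F c) = map (fl F) (csrc A c) \<and>
        ctgt B (fc F c) = fl F (ctgt A c) \<and> cleft B (fc F c) = ft F (cleft A c) \<and>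
        cright B (fc F c) = ft F (cright A c)) \<and>
    (\<forall>p \<in> Lo A. fc F (cid A p) = cid B (fl F p)) \<and>
    (\<forall>a f bs. composable A a f bs \<longrightarrow>
        fc F (ccomp A a f bs) = ccomp B (fc F a) (ft F f) (map (fc F) bs))"

definition vdf_comp ::
  "('bo, 'bt, 'bl, 'bc, 'co, 'ct, 'cl, 'cc) vdf \<Rightarrow> ('ao, 'at, 'al, 'ac, 'bo, 'bt, 'bl, 'bc) vdf \<Rightarrow>
   ('ao, 'at, 'al, 'ac, 'co, 'ct, 'cl, 'cc) vdf" where
  "vdf_comp G F = \<lparr>fo = fo G \<circ> fo F, ft = ft G \<circ> ft F, fl = fl G \<circ> fl F, fc = fc G \<circ> fc F\<rparr>"

definition vdf_eq ::
  "('ao, 'at, 'al, 'ac) vdc \<Rightarrow> ('ao, 'at, 'al, 'ac, 'bo, 'bt, 'bl, 'bc) vdf \<Rightarrow>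
   ('ao, 'at, 'al, 'ac, 'bo, 'bt, 'bl, 'bc) vdf \<Rightarrow> bool" where
  "vdf_eq A F G \<longleftrightarrow>
    (\<forall>a \<in> Ob A. fo F a = fo G a) \<and> (\<forall>f \<in> Tt A. ft F f = ft G f) \<and>
    (\<forall>p \<in> Lo A. fl F p = fl G p) \<and> (\<forall>c \<in> Ce A. fc F c = fc G c)"

definition fully_faithful ::
  "('ao, 'at, 'al, 'ac) vdc \<Rightarrow> ('bo, 'bt, 'bl, 'bc) vdc \<Rightarrow>
   ('ao, 'at, 'al, 'ac, 'bo, 'bt, 'bl, 'bc) vdf \<Rightarrow> bool" where
  "fully_faithful A B F \<longleftrightarrow>
    (\<forall>a \<in> Ob A. \<forall>a' \<in> Ob A.
       bij_betw (ft F) {f \<in> Tt A. tdom A f = a \<and> tcod A f = a'}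
                       {g \<in> Tt B. tdom B g = fo F a \<and> tcod B g = fo F a'}) \<and>
    (\<forall>a a' phi psi. lpath A a phi a' \<longrightarrow> psi \<in> Lo A \<longrightarrow>
       bij_betw (fc F)
         {c \<in> Ce A. csrc A c = phi \<and> tdom A (cleft A c) = a \<and> ctgt A c = psi}
         {d \<in> Ce B. csrc B d = map (fl F) phi \<and> tdom B (cleft B d) = fo F a \<and> ctgt B d = fl F psi})"

definition inj_on_objects ::
  "('ao, 'at, 'al, 'ac) vdc \<Rightarrow> ('ao, 'at, 'al, 'ac, 'bo, 'bt, 'bl, 'bc) vdf \<Rightarrow> bool" where
  "inj_on_objects A F \<longleftrightarrow> inj_on (fo F) (Ob A)"

definition inj_on_loose ::
  "('ao, 'at, 'al, 'ac) vdc \<Rightarrow> ('ao, 'at, 'al, 'ac, 'bo, 'bt, 'bl, 'bc) vdf \<Rightarrow> bool" where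
  "inj_on_loose A F \<longleftrightarrow> inj_on (fl F) (Lo A)"

text \<open>Test universe for the universal property of the pushout B +_A B: a type
large enough to carry (an isomorphic copy of) the pushout constructed from
formal composites of the data of B.\<close>
type_synonym ('bo, 'bt, 'bl, 'bc) univ = "('bo + 'bt + 'bl + 'bc + nat) list set"

definition is_cokernel_pair ::
  "('ao, 'at, 'al, 'ac) vdc \<Rightarrow> ('bo, 'bt, 'bl, 'bc) vdc \<Rightarrow>
   ('ao, 'at, 'al, 'ac, 'bo, 'bt, 'bl, 'bc) vdf \<Rightarrow>
   ('co, 'ct, 'cl, 'cc) vdc \<Rightarrow>
   ('bo, 'bt, 'bl, 'bc, 'co, 'ct, 'cl, 'cc) vdf \<Rightarrow>
   ('bo, 'bt, 'bl, 'bc, 'co, 'ct, 'cl, 'cc) vdf \<Rightarrow> bool" where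
  "is_cokernel_pair A B i C q1 q2 \<longleftrightarrow>
    is_vdf A B i \<and> is_vdf B C q1 \<and> is_vdf B C q2 \<and>
    vdf_eq A (vdf_comp q1 i) (vdf_comp q2 i) \<and>
    (\<forall>(D :: (('bo, 'bt, 'bl, 'bc) univ, ('bo, 'bt, 'bl, 'bc) univ,
              ('bo, 'bt, 'bl, 'bc) univ, ('bo, 'bt, 'bl, 'bc) univ) vdc) r1 r2.
        is_vdf B D r1 \<longrightarrow> is_vdf B D r2 \<longrightarrow> vdf_eq A (vdf_comp r1 i) (vdf_comp r2 i) \<longrightarrow>
        (\<exists>h. is_vdf C D h \<and> vdf_eq B (vdf_comp h q1) r1 \<and> vdf_eq B (vdf_comp h q2) r2 \<and>
             (\<forall>h'. is_vdf C D h' \<longrightarrow> vdf_eq B (vdf_comp h' q1) r1 \<longrightarrow>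
                   vdf_eq B (vdf_comp h' q2) r2 \<longrightarrow> vdf_eq C h h')))"

definition equalizer_test ::
  "('ao, 'at, 'al, 'ac) vdc \<Rightarrow> ('bo, 'bt, 'bl, 'bc) vdc \<Rightarrow>
   ('ao, 'at, 'al, 'ac, 'bo, 'bt, 'bl, 'bc) vdf \<Rightarrow>
   ('bo, 'bt, 'bl, 'bc, 'co, 'ct, 'cl, 'cc) vdf \<Rightarrow>
   ('bo, 'bt, 'bl, 'bc, 'co, 'ct, 'cl, 'cc) vdf \<Rightarrow>
   ('xo, 'xt, 'xl, 'xc) vdc \<Rightarrow> bool" where
  "equalizer_test A B i q1 q2 X \<longleftrightarrow>
    (\<forall>f. is_vdf X B f \<longrightarrow> vdf_eq X (vdf_comp q1 f) (vdf_comp q2 f) \<longrightarrow>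
       (\<exists>h. is_vdf X A h \<and> vdf_eq X (vdf_comp i h) f \<and>
            (\<forall>h'. is_vdf X A h' \<longrightarrow> vdf_eq X (vdf_comp i h') f \<longrightarrow> vdf_eq X h h')))"

end

theory Submission
  imports Defs
begin

definition N :: "nat \<Rightarrow> ('bo + 'bt + 'bl + 'bc + nat)" where
  "N n = Inr (Inr (Inr (Inr n)))"

lemma N_inj[simp]: "(N m = N n) = (m = n)" by (simp add: N_def)

definition tg :: "nat \<Rightarrow> ('bo,'bt,'bl,'bc) univ \<Rightarrow> ('bo,'bt,'bl,'bc) univ" where
  "tg n S = (\<lambda>l. N n # l) ` S"
definition ut :: "nat \<Rightarrow> ('bo,'bt,'bl,'bc) univ \<Rightarrow> ('bo,'bt,'bl,'bc) univ" where
  "ut n z = {l. N n # l \<in> z}"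

lemma ut_tg[simp]: "ut n (tg m S) = (if n = m then S else {})"
  unfolding ut_def tg_def by auto
lemma ut_Un[simp]: "ut n (S \<union> T) = ut n S \<union> ut n T"
  unfolding ut_def by auto

definition pr :: "('bo,'bt,'bl,'bc) univ \<Rightarrow> ('bo,'bt,'bl,'bc) univ \<Rightarrow> ('bo,'bt,'bl,'bc) univ" where
  "pr x y = tg 0 x \<union> tg 1 y"
definition pr3 :: "('bo,'bt,'bl,'bc) univ \<Rightarrow> ('bo,'bt,'bl,'bc) univ \<Rightarrow> ('bo,'bt,'bl,'bc) univ \<Rightarrow> ('bo,'bt,'bl,'bc) univ" where
  "pr3 x y z = tg 0 x \<union> tg 1 y \<union> tg 2 z"

lemma ut_pr[simp]: "ut 0 (pr x y) = x" "ut 1 (pr x y) = y"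
  unfolding pr_def by auto
lemma ut_pr3[simp]: "ut 0 (pr3 x y z) = x" "ut 1 (pr3 x y z) = y" "ut 2 (pr3 x y z) = z"
  unfolding pr3_def by auto
lemma ut_Suc0[simp]: "ut (Suc 0) (pr x y) = y" "ut (Suc 0) (pr3 x y z) = y" "ut (Suc (Suc 0)) (pr3 x y z) = z"
  unfolding pr3_def pr_def by auto

definition encl :: "('bo,'bt,'bl,'bc) univ list \<Rightarrow> ('bo,'bt,'bl,'bc) univ" where
  "encl xs = {[N 0, N (length xs)]} \<union> (\<Union>j<length xs. tg (Suc j) (xs!j))"
definition decl :: "('bo,'bt,'bl,'bc) univ \<Rightarrow> ('bo,'bt,'bl,'bc) univ list" where
  "decl z = map (\<lambda>i. ut (Suc i) z) [0..<(THE n. [N 0, N n] \<in> z)]"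

lemma decl_encl[simp]: "decl (encl xs) = xs"
proof -
  have 1: "(THE n. [N 0, N n] \<in> encl xs) = length xs"
    by (rule the_equality) (auto simp: encl_def tg_def)
  have 2: "ut (Suc i) (encl xs) = xs ! i" if "i < length xs" for i
    using that by (auto simp: encl_def ut_def tg_def)
  show ?thesis unfolding decl_def 1
    by (rule nth_equalityI) (auto simp: 2)
qed

definition LoK :: "('bo,'bt,'bl,'bc) univ set" where
  "LoK = {pr3 x y z | x y z. True}"

lemma pr3_LoK[simp]: "pr3 x y z \<in> LoK" by (auto simp: LoK_def)

fun gp :: "('bo,'bt,'bl,'bc) univ \<Rightarrow> ('bo,'bt,'bl,'bc) univ list \<Rightarrow> ('bo,'bt,'bl,'bc) univ \<Rightarrow> bool" where
  "gp x [] y = (x = y)"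
| "gp x (p # ps) y = (p \<in> LoK \<and> ut 0 p = x \<and> gp (ut 1 p) ps y)"

definition endpt :: "('bo,'bt,'bl,'bc) univ \<Rightarrow> ('bo,'bt,'bl,'bc) univ list \<Rightarrow> ('bo,'bt,'bl,'bc) univ" where
  "endpt x ps = foldl (\<lambda>_ p. ut 1 p) x ps"

lemma endpt_simps[simp]: "endpt x [] = x" "endpt x (p # ps) = endpt (ut 1 p) ps"
  by (simp_all add: endpt_def)

lemma gp_endpt: "gp x ps y \<Longrightarrow> y = endpt x ps"
  by (induction ps arbitrary: x) auto

lemma gp_append: "gp x ps y \<Longrightarrow> gp y qs z \<Longrightarrow> gp x (ps @ qs) z"
  by (induction ps arbitrary: x) auto

definition CeK :: "('bo,'bt,'bl,'bc) univ set" where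
  "CeK = {pr3 (encl ps) q x | ps q x. q \<in> LoK \<and> gp x ps (endpt x ps)}"

lemma CeK_I: "q \<in> LoK \<Longrightarrow> gp x ps (endpt x ps) \<Longrightarrow> pr3 (encl ps) q x \<in> CeK"
  unfolding CeK_def by blast

definition csrcK :: "('bo,'bt,'bl,'bc) univ \<Rightarrow> ('bo,'bt,'bl,'bc) univ list" where
  "csrcK z = decl (ut 0 z)"

lemma csrcK_pr3[simp]: "csrcK (pr3 (encl ps) q x) = ps" by (simp add: csrcK_def)

definition KU :: "(('bo,'bt,'bl,'bc) univ, ('bo,'bt,'bl,'bc) univ, ('bo,'bt,'bl,'bc) univ, ('bo,'bt,'bl,'bc) univ) vdc" where
  "KU = \<lparr>Ob = UNIV, Tt = {pr x y | x y. True}, tdom = ut 0, tcod = ut 1, tid = \<lambda>x. pr x x,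
     tcomp = \<lambda>g f. pr (ut 0 f) (ut 1 g), Lo = LoK, lsrc = ut 0, ltgt = ut 1, Ce = CeK,
     csrc = csrcK, ctgt = ut 1, cleft = \<lambda>z. pr (ut 2 z) (ut 0 (ut 1 z)),
     cright = \<lambda>z. pr (endpt (ut 2 z) (csrcK z)) (ut 1 (ut 1 z)),
     cid = \<lambda>p. pr3 (encl [p]) p (ut 0 p),
     ccomp = \<lambda>a f bs. pr3 (encl (concat (map csrcK bs))) (ut 1 a) (ut 0 f)\<rparr>"

lemma KU_simps[simp]: "Ob KU = UNIV" "Tt KU = {pr x y | x y. True}" "tdom KU = ut 0" "tcod KU = ut 1"
  "tid KU = (\<lambda>x. pr x x)" "tcomp KU = (\<lambda>g f. pr (ut 0 f) (ut 1 g))" "Lo KU = LoK" "lsrc KU = ut 0"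
  "ltgt KU = ut 1" "Ce KU = CeK" "csrc KU = csrcK" "ctgt KU = ut 1"
  "cleft KU = (\<lambda>z. pr (ut 2 z) (ut 0 (ut 1 z)))"
  "cright KU = (\<lambda>z. pr (endpt (ut 2 z) (csrcK z)) (ut 1 (ut 1 z)))"
  "cid KU = (\<lambda>p. pr3 (encl [p]) p (ut 0 p))"
  "ccomp KU = (\<lambda>a f bs. pr3 (encl (concat (map csrcK bs))) (ut 1 a) (ut 0 f))"
  by (simp_all add: KU_def)

lemma lpath_KU: "lpath KU x ps y = gp x ps y"
  by (induction ps arbitrary: x) auto

lemma cpath_KU: "cpath KU f bs g \<Longrightarrow> gp (ut 0 f) (concat (map csrcK bs)) (ut 0 g) \<and> f \<in> Tt KU"
proof (induction bs arbitrary: f)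
  case Nil then show ?case by auto
next
  case (Cons b bs)
  then have b: "b \<in> CeK" "cleft KU b = f" "cpath KU (cright KU b) bs g" by auto
  from b(1) obtain ps q x where bd: "b = pr3 (encl ps) q x" "q \<in> LoK" "gp x ps (endpt x ps)"
    by (auto simp: CeK_def)
  from Cons.IH[OF b(3)] have "gp (endpt x ps) (concat (map csrcK bs)) (ut 0 g)"
    using bd by simp
  with bd b(2) show ?case by (auto intro: gp_append)
qed

lemma pcomp_KU: "concat (map csrcK (pcomp KU bs g cs)) = concat (map csrcK cs) \<or> \<not> pcompat KU bs g cs"
proof (induction bs arbitrary: g cs)
  case Nil then show ?case by (cases cs) auto
next
  case (Cons b bs)
  show ?case
  proof (cases "pcompat KU (b # bs) g cs")
    case True
    let ?k = "length (csrc KU b)"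
    from True have "pcompat KU bs (pright KU g (take ?k cs)) (drop ?k cs)" by (simp add: Let_def)
    with Cons.IH[of "pright KU g (take ?k cs)" "drop ?k cs"]
    have "concat (map csrcK (pcomp KU bs (pright KU g (take ?k cs)) (drop ?k cs))) = concat (map csrcK (drop ?k cs))"
      by blast
    then have "concat (map csrcK (pcomp KU (b # bs) g cs)) = concat (map csrcK (take ?k cs)) @ concat (map csrcK (drop ?k cs))"
      by (simp add: Let_def)
    also have "\<dots> = concat (map csrcK cs)"
      by (metis append_take_drop_id concat_append map_append)
    finally show ?thesis by blast
  qed blast
qed

lemma is_vdc_KU: "is_vdc KU"
  unfolding is_vdc_def
proof (intro conjI)
  show "\<forall>c\<in>Ce KU. cleft KU c \<in> Tt KU \<and> cright KU c \<in> Tt KU \<and>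
        lpath KU (tdom KU (cleft KU c)) (csrc KU c) (tdom KU (cright KU c)) \<and>
        ctgt KU c \<in> Lo KU \<and> lsrc KU (ctgt KU c) = tcod KU (cleft KU c) \<and>
        ltgt KU (ctgt KU c) = tcod KU (cright KU c)"
    by (auto simp: CeK_def lpath_KU)
  show "\<forall>p\<in>Lo KU. cid KU p \<in> Ce KU \<and> csrc KU (cid KU p) = [p] \<and> ctgt KU (cid KU p) = p \<and>
        cleft KU (cid KU p) = tid KU (lsrc KU p) \<and> cright KU (cid KU p) = tid KU (ltgt KU p)"
  proof
    fix p :: "('bo,'bt,'bl,'bc) univ" assume "p \<in> Lo KU"
    then obtain x y z where p: "p = pr3 x y z" by (auto simp: LoK_def)
    have "pr3 (encl [p]) p (ut 0 p) \<in> CeK" unfolding CeK_def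
      by (rule CollectI, rule exI[of _ "[p]"], rule exI[of _ p], rule exI[of _ "ut 0 p"]) (simp add: p)
    then show "cid KU p \<in> Ce KU \<and> csrc KU (cid KU p) = [p] \<and> ctgt KU (cid KU p) = p \<and>
        cleft KU (cid KU p) = tid KU (lsrc KU p) \<and> cright KU (cid KU p) = tid KU (ltgt KU p)"
      by (simp add: p)
  qed
  show "\<forall>a f bs. composable KU a f bs \<longrightarrow>
        ccomp KU a f bs \<in> Ce KU \<and>
        csrc KU (ccomp KU a f bs) = concat (map (csrc KU) bs) \<and>
        ctgt KU (ccomp KU a f bs) = ctgt KU a \<and>
        cleft KU (ccomp KU a f bs) = tcomp KU (cleft KU a) f \<and>
        cright KU (ccomp KU a f bs) = tcomp KU (cright KU a) (pright KU f bs)"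
  proof (intro allI impI)
    fix a f bs assume c: "composable KU a f bs"
    then have a: "a \<in> CeK" and cp: "cpath KU f bs (pright KU f bs)"
      and t: "ut 1 f = ut 2 a" "ut 1 (pright KU f bs) = endpt (ut 2 a) (csrcK a)"
      by (auto simp: composable_def)
    from a obtain ps q x where ad: "a = pr3 (encl ps) q x" "q \<in> LoK" by (auto simp: CeK_def)
    from cpath_KU[OF cp] have g: "gp (ut 0 f) (concat (map csrcK bs)) (ut 0 (pright KU f bs))" by simp
    show "ccomp KU a f bs \<in> Ce KU \<and>
        csrc KU (ccomp KU a f bs) = concat (map (csrc KU) bs) \<and>
        ctgt KU (ccomp KU a f bs) = ctgt KU a \<and>
        cleft KU (ccomp KU a f bs) = tcomp KU (cleft KU a) f \<and>
        cright KU (ccomp KU a f bs) = tcomp KU (cright KU a) (pright KU f bs)"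
      using g gp_endpt[OF g] ad by (auto simp: CeK_def)
  qed
  show "\<forall>a\<in>Ce KU. ccomp KU a (tid KU (tdom KU (cleft KU a))) (map (cid KU) (csrc KU a)) = a"
  proof
    fix a assume "a \<in> Ce KU"
    then obtain ps q x where ad: "a = pr3 (encl ps) q x" by (auto simp: CeK_def)
    have "concat (map (\<lambda>p. [p]) ps) = ps" by (induction ps) auto
    then show "ccomp KU a (tid KU (tdom KU (cleft KU a))) (map (cid KU) (csrc KU a)) = a"
      using ad by (simp add: comp_def)
  qed
  show "\<forall>b\<in>Ce KU. ccomp KU (cid KU (ctgt KU b)) (cleft KU b) [b] = b"
    by (auto simp: CeK_def)
  show "\<forall>a f bs g cs. composable KU a f bs \<longrightarrow> pcompat KU bs g cs \<longrightarrow>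
        composable KU (ccomp KU a f bs) g cs \<longrightarrow>
        ccomp KU (ccomp KU a f bs) g cs = ccomp KU a (tcomp KU f g) (pcomp KU bs g cs)"
  proof (intro allI impI)
    fix a f bs g cs assume "pcompat KU bs g cs"
    then have "concat (map csrcK (pcomp KU bs g cs)) = concat (map csrcK cs)" using pcomp_KU by blast
    then show "ccomp KU (ccomp KU a f bs) g cs = ccomp KU a (tcomp KU f g) (pcomp KU bs g cs)" by simp
  qed
qed (auto simp: LoK_def)

definition roK :: "('ao, 'at, 'al, 'ac) vdc \<Rightarrow> ('ao, 'at, 'al, 'ac, 'bo, 'bt, 'bl, 'bc) vdf \<Rightarrow> nat \<Rightarrow> 'bo \<Rightarrow> ('bo,'bt,'bl,'bc) univ" where
  "roK A i k b = {[Inl b, N (if b \<in> fo i ` Ob A then 0 else k)]}"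

definition rlK :: "('ao, 'at, 'al, 'ac) vdc \<Rightarrow> ('bo, 'bt, 'bl, 'bc) vdc \<Rightarrow> ('ao, 'at, 'al, 'ac, 'bo, 'bt, 'bl, 'bc) vdf \<Rightarrow> nat \<Rightarrow> 'bl \<Rightarrow> ('bo,'bt,'bl,'bc) univ" where
  "rlK A B i k p = pr3 (roK A i k (lsrc B p)) (roK A i k (ltgt B p))
      {[Inr (Inr (Inl p)), N (if p \<in> fl i ` Lo A then 0 else k)]}"

definition rK :: "('ao, 'at, 'al, 'ac) vdc \<Rightarrow> ('bo, 'bt, 'bl, 'bc) vdc \<Rightarrow> ('ao, 'at, 'al, 'ac, 'bo, 'bt, 'bl, 'bc) vdf \<Rightarrow> nat \<Rightarrow>
   ('bo, 'bt, 'bl, 'bc, ('bo,'bt,'bl,'bc) univ, ('bo,'bt,'bl,'bc) univ, ('bo,'bt,'bl,'bc) univ, ('bo,'bt,'bl,'bc) univ) vdf" where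
  "rK A B i k = \<lparr>fo = roK A i k, ft = \<lambda>f. pr (roK A i k (tdom B f)) (roK A i k (tcod B f)),
     fl = rlK A B i k,
     fc = \<lambda>c. pr3 (encl (map (rlK A B i k) (csrc B c))) (rlK A B i k (ctgt B c)) (roK A i k (tdom B (cleft B c)))\<rparr>"

lemma rK_simps[simp]: "fo (rK A B i k) = roK A i k"
  "ft (rK A B i k) = (\<lambda>f. pr (roK A i k (tdom B f)) (roK A i k (tcod B f)))"
  "fl (rK A B i k) = rlK A B i k"
  "fc (rK A B i k) = (\<lambda>c. pr3 (encl (map (rlK A B i k) (csrc B c))) (rlK A B i k (ctgt B c)) (roK A i k (tdom B (cleft B c))))"
  by (simp_all add: rK_def)

lemma rl_src[simp]: "ut 0 (rlK A B i k p) = roK A i k (lsrc B p)" "ut (Suc 0) (rlK A B i k p) = roK A i k (ltgt B p)"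
  by (simp_all add: rlK_def)

lemma gp_r: "lpath B x ps y \<Longrightarrow> gp (roK A i k x) (map (rlK A B i k) ps) (roK A i k y)"
  by (induction ps arbitrary: x) (auto simp: rlK_def)

lemma vdc_tdom_comp:
  assumes "is_vdc V" "composable V a f bs"
  shows "tdom V (tcomp V (cleft V a) f) = tdom V f"
proof -
  have fT: "f \<in> Tt V"
  proof (cases bs)
    case Nil then show ?thesis using assms(2) by (simp add: composable_def)
  next
    case (Cons b bs') then show ?thesis using assms by (auto simp: composable_def is_vdc_def)
  qed
  have "cleft V a \<in> Tt V" using assms by (auto simp: composable_def is_vdc_def)
  with fT assms show ?thesis unfolding is_vdc_def composable_def by metis
qed

lemma is_vdf_rK: assumes B: "is_vdc B" shows "is_vdf B KU (rK A B i k)"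
  unfolding is_vdf_def
proof (intro conjI)
  show "is_vdc B" by fact
  show "is_vdc KU" by (rule is_vdc_KU)
  show "\<forall>c\<in>Ce B. fc (rK A B i k) c \<in> Ce KU \<and> csrc KU (fc (rK A B i k) c) = map (fl (rK A B i k)) (csrc B c) \<and>
        ctgt KU (fc (rK A B i k) c) = fl (rK A B i k) (ctgt B c) \<and> cleft KU (fc (rK A B i k) c) = ft (rK A B i k) (cleft B c) \<and>
        cright KU (fc (rK A B i k) c) = ft (rK A B i k) (cright B c)"
  proof
    fix c assume c: "c \<in> Ce B"
    let ?x = "roK A i k (tdom B (cleft B c))" and ?y = "roK A i k (tdom B (cright B c))"
    from c B have lp: "lpath B (tdom B (cleft B c)) (csrc B c) (tdom B (cright B c))"
      and e: "lsrc B (ctgt B c) = tcod B (cleft B c)" "ltgt B (ctgt B c) = tcod B (cright B c)"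
      by (auto simp: is_vdc_def)
    have g: "gp ?x (map (rlK A B i k) (csrc B c)) ?y" by (rule gp_r[OF lp])
    note ge = gp_endpt[OF g]
    have "pr3 (encl (map (rlK A B i k) (csrc B c))) (rlK A B i k (ctgt B c)) ?x \<in> CeK"
      using g ge by (intro CeK_I) (simp_all add: rlK_def)
    then show "fc (rK A B i k) c \<in> Ce KU \<and> csrc KU (fc (rK A B i k) c) = map (fl (rK A B i k)) (csrc B c) \<and>
        ctgt KU (fc (rK A B i k) c) = fl (rK A B i k) (ctgt B c) \<and> cleft KU (fc (rK A B i k) c) = ft (rK A B i k) (cleft B c) \<and>
        cright KU (fc (rK A B i k) c) = ft (rK A B i k) (cright B c)"
      using ge e by simp
  qed
  show "\<forall>a f bs. composable B a f bs \<longrightarrow>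
        fc (rK A B i k) (ccomp B a f bs) = ccomp KU (fc (rK A B i k) a) (ft (rK A B i k) f) (map (fc (rK A B i k)) bs)"
  proof (intro allI impI)
    fix a f bs assume c: "composable B a f bs"
    with B have "csrc B (ccomp B a f bs) = concat (map (csrc B) bs)" "ctgt B (ccomp B a f bs) = ctgt B a"
      "cleft B (ccomp B a f bs) = tcomp B (cleft B a) f" by (auto simp: is_vdc_def)
    moreover have "tdom B (tcomp B (cleft B a) f) = tdom B f" by (rule vdc_tdom_comp[OF B c])
    ultimately show "fc (rK A B i k) (ccomp B a f bs) = ccomp KU (fc (rK A B i k) a) (ft (rK A B i k) f) (map (fc (rK A B i k)) bs)"
      by (simp add: map_concat comp_def)
  qed
qed (use B in \<open>auto simp: is_vdc_def rlK_def\<close>)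

lemma vdc_T: "is_vdc V \<Longrightarrow> f \<in> Tt V \<Longrightarrow> tdom V f \<in> Ob V \<and> tcod V f \<in> Ob V"
  unfolding is_vdc_def by (elim conjE) blast
lemma vdc_id: "is_vdc V \<Longrightarrow> a \<in> Ob V \<Longrightarrow> tid V a \<in> Tt V \<and> tdom V (tid V a) = a \<and> tcod V (tid V a) = a"
  unfolding is_vdc_def by (elim conjE) blast
lemma vdc_comp: "is_vdc V \<Longrightarrow> f \<in> Tt V \<Longrightarrow> g \<in> Tt V \<Longrightarrow> tcod V f = tdom V g \<Longrightarrow>
   tcomp V g f \<in> Tt V \<and> tdom V (tcomp V g f) = tdom V f \<and> tcod V (tcomp V g f) = tcod V g"
  unfolding is_vdc_def by (elim conjE) blast
lemma vdc_L: "is_vdc V \<Longrightarrow> p \<in> Lo V \<Longrightarrow> lsrc V p \<in> Ob V \<and> ltgt V p \<in> Ob V"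
  unfolding is_vdc_def by (elim conjE) blast
lemma vdc_C: "is_vdc V \<Longrightarrow> c \<in> Ce V \<Longrightarrow> cleft V c \<in> Tt V \<and> cright V c \<in> Tt V \<and>
   lpath V (tdom V (cleft V c)) (csrc V c) (tdom V (cright V c)) \<and> ctgt V c \<in> Lo V \<and>
   lsrc V (ctgt V c) = tcod V (cleft V c) \<and> ltgt V (ctgt V c) = tcod V (cright V c)"
  unfolding is_vdc_def by (elim conjE) blast
lemma vdc_cid: "is_vdc V \<Longrightarrow> p \<in> Lo V \<Longrightarrow> cid V p \<in> Ce V \<and> csrc V (cid V p) = [p] \<and> ctgt V (cid V p) = p \<and>
   cleft V (cid V p) = tid V (lsrc V p) \<and> cright V (cid V p) = tid V (ltgt V p)"
  unfolding is_vdc_def by (elim conjE) blast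
lemma vdc_cc: "is_vdc V \<Longrightarrow> composable V a f bs \<Longrightarrow> ccomp V a f bs \<in> Ce V \<and>
        csrc V (ccomp V a f bs) = concat (map (csrc V) bs) \<and>
        ctgt V (ccomp V a f bs) = ctgt V a \<and>
        cleft V (ccomp V a f bs) = tcomp V (cleft V a) f \<and>
        cright V (ccomp V a f bs) = tcomp V (cright V a) (pright V f bs)"
  unfolding is_vdc_def by (elim conjE) blast

lemma vdf_vdc: "is_vdf A B F \<Longrightarrow> is_vdc A \<and> is_vdc B"
  unfolding is_vdf_def by blast
lemma vdf_tid: "is_vdf A B F \<Longrightarrow> a \<in> Ob A \<Longrightarrow> ft F (tid A a) = tid B (fo F a)"
  unfolding is_vdf_def by (elim conjE) blast
lemma vdf_tcomp: "is_vdf A B F \<Longrightarrow> f \<in> Tt A \<Longrightarrow> g \<in> Tt A \<Longrightarrow> tcod A f = tdom A g \<Longrightarrow>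
   ft F (tcomp A g f) = tcomp B (ft F g) (ft F f)"
  unfolding is_vdf_def by (elim conjE) blast
lemma vdf_cid: "is_vdf A B F \<Longrightarrow> p \<in> Lo A \<Longrightarrow> fc F (cid A p) = cid B (fl F p)"
  unfolding is_vdf_def by (elim conjE) blast
lemma vdf_cc: "is_vdf A B F \<Longrightarrow> composable A a f bs \<Longrightarrow>
   fc F (ccomp A a f bs) = ccomp B (fc F a) (ft F f) (map (fc F) bs)"
  unfolding is_vdf_def by (elim conjE) blast

lemma lpath_in: "is_vdc V \<Longrightarrow> lpath V x ps y \<Longrightarrow> x \<in> Ob V \<and> y \<in> Ob V \<and> set ps \<subseteq> Lo V"
  by (induction ps arbitrary: x) (auto dest: vdc_L)

lemma lpath_uniq: "lpath V x ps y \<Longrightarrow> lpath V x ps y' \<Longrightarrow> y = y'"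
  by (induction ps arbitrary: x) auto

lemma cpath_in: "is_vdc V \<Longrightarrow> cpath V f bs g \<Longrightarrow> f \<in> Tt V \<and> g \<in> Tt V \<and> set bs \<subseteq> Ce V"
  by (induction bs arbitrary: f) (auto dest: vdc_C)

definition pres :: "('ao, 'at, 'al, 'ac) vdc \<Rightarrow> ('bo, 'bt, 'bl, 'bc) vdc \<Rightarrow>
   ('ao, 'at, 'al, 'ac, 'bo, 'bt, 'bl, 'bc) vdf \<Rightarrow> bool" where
  "pres A B F \<longleftrightarrow>
    (\<forall>a \<in> Ob A. fo F a \<in> Ob B) \<and>
    (\<forall>f \<in> Tt A. ft F f \<in> Tt B \<and> tdom B (ft F f) = fo F (tdom A f) \<and> tcod B (ft F f) = fo F (tcod A f)) \<and>
    (\<forall>p \<in> Lo A. fl F p \<in> Lo B \<and> lsrc B (fl F p) = fo F (lsrc A p) \<and> ltgt B (fl F p) = fo F (ltgt A p)) \<and>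
    (\<forall>c \<in> Ce A. fc F c \<in> Ce B \<and> csrc B (fc F c) = map (fl F) (csrc A c) \<and>
        ctgt B (fc F c) = fl F (ctgt A c) \<and> cleft B (fc F c) = ft F (cleft A c) \<and>
        cright B (fc F c) = ft F (cright A c))"

lemma vdf_pres: "is_vdf A B F \<Longrightarrow> pres A B F"
  unfolding is_vdf_def pres_def by (elim conjE) (intro conjI; assumption)

lemma cpath_pres: "pres X A H \<Longrightarrow> cpath X f bs g \<Longrightarrow> cpath A (ft H f) (map (fc H) bs) (ft H g)"
  by (induction bs arbitrary: f) (auto simp: pres_def)

lemma pright_pres:
  assumes P: "pres X A H" and bs: "set bs \<subseteq> Ce X"
  shows "pright A (ft H f) (map (fc H) bs) = ft H (pright X f bs)"
proof (cases "bs = []")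
  case True then show ?thesis by (simp add: pright_def)
next
  case False
  then have l: "last bs \<in> Ce X" using last_in_set bs by blast
  have "\<forall>c\<in>Ce X. cright A (fc H c) = ft H (cright X c)" using P unfolding pres_def by blast
  then have "cright A (fc H (last bs)) = ft H (cright X (last bs))" using l by blast
  then show ?thesis using False by (simp add: pright_def last_map)
qed

lemma composable_pres:
  assumes X: "is_vdc X" and P: "pres X A H" and c: "composable X a f bs"
  shows "composable A (fc H a) (ft H f) (map (fc H) bs)"
proof -
  from c have a: "a \<in> Ce X" and cp: "cpath X f bs (pright X f bs)" and
    m: "map (ctgt X) bs = csrc X a" and t1: "tcod X f = tdom X (cleft X a)"
    and t2: "tcod X (pright X f bs) = tdom X (cright X a)"
    by (auto simp: composable_def)
  from cpath_in[OF X cp] have fT: "f \<in> Tt X" and gT: "pright X f bs \<in> Tt X" and bs: "set bs \<subseteq> Ce X" by auto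
  have pr: "pright A (ft H f) (map (fc H) bs) = ft H (pright X f bs)" by (rule pright_pres[OF P bs])
  have lT: "cleft X a \<in> Tt X" "cright X a \<in> Tt X" using vdc_C[OF X a] by auto
  have Pt: "\<And>u. u \<in> Tt X \<Longrightarrow> tdom A (ft H u) = fo H (tdom X u) \<and> tcod A (ft H u) = fo H (tcod X u)"
    using P unfolding pres_def by blast
  have Pc: "cleft A (fc H a) = ft H (cleft X a)" "cright A (fc H a) = ft H (cright X a)"
    using P a unfolding pres_def by blast+
  show ?thesis unfolding composable_def pr
  proof (intro conjI)
    show "fc H a \<in> Ce A" using P a by (auto simp: pres_def)
    show "cpath A (ft H f) (map (fc H) bs) (ft H (pright X f bs))" by (rule cpath_pres[OF P cp])
    have "map (ctgt A) (map (fc H) bs) = map (fl H) (map (ctgt X) bs)"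
      using P bs by (auto simp: pres_def)
    also have "\<dots> = csrc A (fc H a)" using P a m by (auto simp: pres_def)
    finally show "map (ctgt A) (map (fc H) bs) = csrc A (fc H a)" .
    show "tcod A (ft H f) = tdom A (cleft A (fc H a))" using Pt[OF fT] Pt[OF lT(1)] Pc t1 by simp
    show "tcod A (ft H (pright X f bs)) = tdom A (cright A (fc H a))" using Pt[OF gT] Pt[OF lT(2)] Pc t2 by simp
  qed
qed

section \<open>Lifting along i\<close>

definition hoL where "hoL A i f x = the_inv_into (Ob A) (fo i) (fo f x)"
definition hlL where "hlL A i f p = the_inv_into (Lo A) (fl i) (fl f p)"
definition htL where "htL A X i f u = (SOME g. g \<in> Tt A \<and> tdom A g = hoL A i f (tdom X u) \<and>
      tcod A g = hoL A i f (tcod X u) \<and> ft i g = ft f u)"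
definition hcL where "hcL A X i f c = (SOME d. d \<in> Ce A \<and> csrc A d = map (hlL A i f) (csrc X c) \<and>
      tdom A (cleft A d) = hoL A i f (tdom X (cleft X c)) \<and> ctgt A d = hlL A i f (ctgt X c) \<and> fc i d = fc f c)"
definition hL where "hL A X i f = \<lparr>fo = hoL A i f, ft = htL A X i f, fl = hlL A i f, fc = hcL A X i f\<rparr>"

locale LC =
  fixes A :: "('ao, 'at, 'al, 'ac) vdc"
    and B :: "('bo, 'bt, 'bl, 'bc) vdc"
    and i :: "('ao, 'at, 'al, 'ac, 'bo, 'bt, 'bl, 'bc) vdf"
    and X :: "('xo, 'xt, 'xl, 'xc) vdc"
    and f :: "('xo, 'xt, 'xl, 'xc, 'bo, 'bt, 'bl, 'bc) vdf"
  assumes iv: "is_vdf A B i" and ff: "fully_faithful A B i" and io: "inj_on_objects A i"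
    and il: "inj_on_loose A i" and fv: "is_vdf X B f"
    and obim: "\<forall>x\<in>Ob X. fo f x \<in> fo i ` Ob A" and loim: "\<forall>p\<in>Lo X. fl f p \<in> fl i ` Lo A"
begin

abbreviation "ho \<equiv> hoL A i f"
abbreviation "hl \<equiv> hlL A i f"
abbreviation "ht \<equiv> htL A X i f"
abbreviation "hc \<equiv> hcL A X i f"

lemma A: "is_vdc A" and B: "is_vdc B" and X: "is_vdc X" using vdf_vdc[OF iv] vdf_vdc[OF fv] by auto

lemma Pi: "pres A B i" and Pf: "pres X B f" using iv fv by (auto intro: vdf_pres)

lemma ho1: "x \<in> Ob X \<Longrightarrow> ho x \<in> Ob A \<and> fo i (ho x) = fo f x"
  using obim io unfolding hoL_def inj_on_objects_def
  by (auto intro: the_inv_into_into f_the_inv_into_f)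

lemma hl1: "p \<in> Lo X \<Longrightarrow> hl p \<in> Lo A \<and> fl i (hl p) = fl f p"
  using loim il unfolding hlL_def inj_on_loose_def
  by (auto intro: the_inv_into_into f_the_inv_into_f)

lemma oinj: "a \<in> Ob A \<Longrightarrow> a' \<in> Ob A \<Longrightarrow> fo i a = fo i a' \<Longrightarrow> a = a'"
  using io unfolding inj_on_objects_def inj_on_def by blast

lemma linj: "a \<in> Lo A \<Longrightarrow> a' \<in> Lo A \<Longrightarrow> fl i a = fl i a' \<Longrightarrow> a = a'"
  using il unfolding inj_on_loose_def inj_on_def by blast

lemma ff_cells: "lpath A a phi a' \<Longrightarrow> psi \<in> Lo A \<Longrightarrow> bij_betw (fc i)
         {c \<in> Ce A. csrc A c = phi \<and> tdom A (cleft A c) = a \<and> ctgt A c = psi}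
         {d \<in> Ce B. csrc B d = map (fl i) phi \<and> tdom B (cleft B d) = fo i a \<and> ctgt B d = fl i psi}"
  using ff unfolding fully_faithful_def by blast

lemma ff_tight: "a \<in> Ob A \<Longrightarrow> a' \<in> Ob A \<Longrightarrow> bij_betw (ft i) {f \<in> Tt A. tdom A f = a \<and> tcod A f = a'}
                       {g \<in> Tt B. tdom B g = fo i a \<and> tcod B g = fo i a'}"
  using ff unfolding fully_faithful_def by blast

lemma tinj: "g1 \<in> Tt A \<Longrightarrow> g2 \<in> Tt A \<Longrightarrow> tdom A g1 = tdom A g2 \<Longrightarrow> tcod A g1 = tcod A g2 \<Longrightarrow>
   ft i g1 = ft i g2 \<Longrightarrow> g1 = g2"
proof -
  assume g: "g1 \<in> Tt A" "g2 \<in> Tt A" "tdom A g1 = tdom A g2" "tcod A g1 = tcod A g2" "ft i g1 = ft i g2"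
  then have ob: "tdom A g1 \<in> Ob A" "tcod A g1 \<in> Ob A" using vdc_T[OF A] g by auto
  have "inj_on (ft i) {h \<in> Tt A. tdom A h = tdom A g1 \<and> tcod A h = tcod A g1}"
    using ff_tight[OF ob] unfolding bij_betw_def by blast
  then show "g1 = g2" by (rule inj_onD) (use g in auto)
qed

lemma tsurj: "a \<in> Ob A \<Longrightarrow> a' \<in> Ob A \<Longrightarrow> g \<in> Tt B \<Longrightarrow> tdom B g = fo i a \<Longrightarrow> tcod B g = fo i a' \<Longrightarrow>
   \<exists>g'. g' \<in> Tt A \<and> tdom A g' = a \<and> tcod A g' = a' \<and> ft i g' = g"
proof -
  assume h: "a \<in> Ob A" "a' \<in> Ob A" "g \<in> Tt B" "tdom B g = fo i a" "tcod B g = fo i a'"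
  have "ft i ` {h \<in> Tt A. tdom A h = a \<and> tcod A h = a'} = {g \<in> Tt B. tdom B g = fo i a \<and> tcod B g = fo i a'}"
    using ff_tight[OF h(1,2)] unfolding bij_betw_def by blast
  with h have "g \<in> ft i ` {h \<in> Tt A. tdom A h = a \<and> tcod A h = a'}" by blast
  then show ?thesis by blast
qed

lemma cinj: "d1 \<in> Ce A \<Longrightarrow> d2 \<in> Ce A \<Longrightarrow> csrc A d1 = csrc A d2 \<Longrightarrow> tdom A (cleft A d1) = tdom A (cleft A d2) \<Longrightarrow>
   ctgt A d1 = ctgt A d2 \<Longrightarrow> fc i d1 = fc i d2 \<Longrightarrow> d1 = d2"
proof -
  assume d: "d1 \<in> Ce A" "d2 \<in> Ce A" "csrc A d1 = csrc A d2" "tdom A (cleft A d1) = tdom A (cleft A d2)"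
    "ctgt A d1 = ctgt A d2" "fc i d1 = fc i d2"
  then have lp: "lpath A (tdom A (cleft A d1)) (csrc A d1) (tdom A (cright A d1))" and
    t: "ctgt A d1 \<in> Lo A" using vdc_C[OF A d(1)] by auto
  have "inj_on (fc i) {c \<in> Ce A. csrc A c = csrc A d1 \<and> tdom A (cleft A c) = tdom A (cleft A d1) \<and> ctgt A c = ctgt A d1}"
    using ff_cells[OF lp t] unfolding bij_betw_def by blast
  then show "d1 = d2" by (rule inj_onD) (use d in auto)
qed

lemma csurj: "lpath A a phi a' \<Longrightarrow> psi \<in> Lo A \<Longrightarrow> d \<in> Ce B \<Longrightarrow> csrc B d = map (fl i) phi \<Longrightarrow>
   tdom B (cleft B d) = fo i a \<Longrightarrow> ctgt B d = fl i psi \<Longrightarrow>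
   \<exists>d'. d' \<in> Ce A \<and> csrc A d' = phi \<and> tdom A (cleft A d') = a \<and> ctgt A d' = psi \<and> fc i d' = d"
proof -
  assume h: "lpath A a phi a'" "psi \<in> Lo A" "d \<in> Ce B" "csrc B d = map (fl i) phi"
   "tdom B (cleft B d) = fo i a" "ctgt B d = fl i psi"
  have "fc i ` {c \<in> Ce A. csrc A c = phi \<and> tdom A (cleft A c) = a \<and> ctgt A c = psi} =
     {d \<in> Ce B. csrc B d = map (fl i) phi \<and> tdom B (cleft B d) = fo i a \<and> ctgt B d = fl i psi}"
    using ff_cells[OF h(1,2)] unfolding bij_betw_def by blast
  with h have "d \<in> fc i ` {c \<in> Ce A. csrc A c = phi \<and> tdom A (cleft A c) = a \<and> ctgt A c = psi}" by blast
  then show ?thesis by blast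
qed

lemma hl_src: "p \<in> Lo X \<Longrightarrow> lsrc A (hl p) = ho (lsrc X p) \<and> ltgt A (hl p) = ho (ltgt X p)"
proof -
  assume p: "p \<in> Lo X"
  then have o: "lsrc X p \<in> Ob X" "ltgt X p \<in> Ob X" using vdc_L[OF X] by auto
  from hl1[OF p] have hp: "hl p \<in> Lo A" "fl i (hl p) = fl f p" by auto
  have o2: "lsrc A (hl p) \<in> Ob A" "ltgt A (hl p) \<in> Ob A" using hp vdc_L[OF A] by auto
  have "fo i (lsrc A (hl p)) = lsrc B (fl i (hl p))" using Pi hp by (auto simp: pres_def)
  also have "\<dots> = fo f (lsrc X p)" using Pf p hp by (auto simp: pres_def)
  finally have 1: "fo i (lsrc A (hl p)) = fo i (ho (lsrc X p))" using ho1[OF o(1)] by simp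
  have "fo i (ltgt A (hl p)) = ltgt B (fl i (hl p))" using Pi hp by (auto simp: pres_def)
  also have "\<dots> = fo f (ltgt X p)" using Pf p hp by (auto simp: pres_def)
  finally have 2: "fo i (ltgt A (hl p)) = fo i (ho (ltgt X p))" using ho1[OF o(2)] by simp
  show ?thesis using oinj[OF o2(1) _ 1] oinj[OF o2(2) _ 2] ho1 o by blast
qed

lemma lpath_h: "lpath X x ps y \<Longrightarrow> lpath A (ho x) (map hl ps) (ho y)"
proof (induction ps arbitrary: x)
  case Nil then show ?case using ho1 by auto
next
  case (Cons p ps) then show ?case using hl1 hl_src by auto
qed

lemma ht1: "u \<in> Tt X \<Longrightarrow> ht u \<in> Tt A \<and> tdom A (ht u) = ho (tdom X u) \<and> tcod A (ht u) = ho (tcod X u) \<and> ft i (ht u) = ft f u"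
proof -
  assume u: "u \<in> Tt X"
  then have o: "tdom X u \<in> Ob X" "tcod X u \<in> Ob X" using vdc_T[OF X] by auto
  have fu: "ft f u \<in> Tt B" "tdom B (ft f u) = fo f (tdom X u)" "tcod B (ft f u) = fo f (tcod X u)"
    using Pf u by (auto simp: pres_def)
  have "\<exists>g. g \<in> Tt A \<and> tdom A g = ho (tdom X u) \<and> tcod A g = ho (tcod X u) \<and> ft i g = ft f u"
    using tsurj[of "ho (tdom X u)" "ho (tcod X u)" "ft f u"] ho1 o fu by auto
  then show ?thesis unfolding htL_def by (rule someI_ex)
qed

lemma hc1: "c \<in> Ce X \<Longrightarrow> hc c \<in> Ce A \<and> csrc A (hc c) = map hl (csrc X c) \<and>
      tdom A (cleft A (hc c)) = ho (tdom X (cleft X c)) \<and> ctgt A (hc c) = hl (ctgt X c) \<and> fc i (hc c) = fc f c"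
proof -
  assume c: "c \<in> Ce X"
  then have lp: "lpath X (tdom X (cleft X c)) (csrc X c) (tdom X (cright X c))" and t: "ctgt X c \<in> Lo X"
    and lT: "cleft X c \<in> Tt X"
    using vdc_C[OF X c] by auto
  from lpath_in[OF X lp] have src: "set (csrc X c) \<subseteq> Lo X" and o: "tdom X (cleft X c) \<in> Ob X" by auto
  have fc: "fc f c \<in> Ce B" "csrc B (fc f c) = map (fl f) (csrc X c)" "ctgt B (fc f c) = fl f (ctgt X c)"
    "cleft B (fc f c) = ft f (cleft X c)" using Pf c by (auto simp: pres_def)
  have "tdom B (cleft B (fc f c)) = fo f (tdom X (cleft X c))" using fc(4) Pf lT by (auto simp: pres_def)
  also have "\<dots> = fo i (ho (tdom X (cleft X c)))" using ho1[OF o] by simp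
  finally have e1: "tdom B (cleft B (fc f c)) = fo i (ho (tdom X (cleft X c)))" .
  have e2: "csrc B (fc f c) = map (fl i) (map hl (csrc X c))" using fc(2) src hl1 by auto
  have e3: "ctgt B (fc f c) = fl i (hl (ctgt X c))" using fc(3) hl1[OF t] by simp
  have "\<exists>d. d \<in> Ce A \<and> csrc A d = map hl (csrc X c) \<and>
      tdom A (cleft A d) = ho (tdom X (cleft X c)) \<and> ctgt A d = hl (ctgt X c) \<and> fc i d = fc f c"
    using csurj[OF lpath_h[OF lp] conjunct1[OF hl1[OF t]] fc(1) e2 e1 e3] by blast
  then show ?thesis unfolding hcL_def by (rule someI_ex)
qed

lemma hL_simps[simp]: "fo (hL A X i f) = ho" "ft (hL A X i f) = ht" "fl (hL A X i f) = hl" "fc (hL A X i f) = hc"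
  by (simp_all add: hL_def)

lemma hc_bd: "c \<in> Ce X \<Longrightarrow> cleft A (hc c) = ht (cleft X c) \<and> cright A (hc c) = ht (cright X c)"
proof -
  assume c: "c \<in> Ce X"
  note h = hc1[OF c]
  have cX: "cleft X c \<in> Tt X" "cright X c \<in> Tt X" "ctgt X c \<in> Lo X"
    "lsrc X (ctgt X c) = tcod X (cleft X c)" "ltgt X (ctgt X c) = tcod X (cright X c)"
    and lp: "lpath X (tdom X (cleft X c)) (csrc X c) (tdom X (cright X c))"
    using vdc_C[OF X c] by auto
  have cA: "cleft A (hc c) \<in> Tt A" "cright A (hc c) \<in> Tt A"
    "lsrc A (ctgt A (hc c)) = tcod A (cleft A (hc c))" "ltgt A (ctgt A (hc c)) = tcod A (cright A (hc c))"
    and lpA: "lpath A (tdom A (cleft A (hc c))) (csrc A (hc c)) (tdom A (cright A (hc c)))"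
    using vdc_C[OF A conjunct1[OF h]] by auto
  have fcd: "cleft B (fc i (hc c)) = ft i (cleft A (hc c))" "cright B (fc i (hc c)) = ft i (cright A (hc c))"
    using Pi h by (auto simp: pres_def)
  have fcc: "cleft B (fc f c) = ft f (cleft X c)" "cright B (fc f c) = ft f (cright X c)"
    using Pf c by (auto simp: pres_def)
  note t1 = ht1[OF cX(1)] and t2 = ht1[OF cX(2)]
  have l: "cleft A (hc c) = ht (cleft X c)"
  proof (rule tinj)
    show "tdom A (cleft A (hc c)) = tdom A (ht (cleft X c))" using h t1 by simp
    show "tcod A (cleft A (hc c)) = tcod A (ht (cleft X c))" using h t1 cA(3) hl_src[OF cX(3)] cX(4) by simp
    show "ft i (cleft A (hc c)) = ft i (ht (cleft X c))" using fcd fcc h t1 by simp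
  qed (use cA t1 in auto)
  have r: "cright A (hc c) = ht (cright X c)"
  proof (rule tinj)
    have "lpath A (ho (tdom X (cleft X c))) (map hl (csrc X c)) (ho (tdom X (cright X c)))"
      by (rule lpath_h[OF lp])
    then show "tdom A (cright A (hc c)) = tdom A (ht (cright X c))" using h t2 lpA lpath_uniq by metis
    show "tcod A (cright A (hc c)) = tcod A (ht (cright X c))" using h t2 cA(4) hl_src[OF cX(3)] cX(5) by simp
    show "ft i (cright A (hc c)) = ft i (ht (cright X c))" using fcd fcc h t2 by simp
  qed (use cA t2 in auto)
  show ?thesis using l r by simp
qed

lemma pres_h: "pres X A (hL A X i f)"
  unfolding pres_def using ho1 ht1 hl1 hl_src hc1 hc_bd by simp

lemma vdf_h: "is_vdf X A (hL A X i f)"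
  unfolding is_vdf_def
proof (intro conjI)
  show "is_vdc X" by (rule X)
  show "is_vdc A" by (rule A)
  show "\<forall>a\<in>Ob X. fo (hL A X i f) a \<in> Ob A" using ho1 by simp
  show "\<forall>u\<in>Tt X. ft (hL A X i f) u \<in> Tt A \<and> tdom A (ft (hL A X i f) u) = fo (hL A X i f) (tdom X u) \<and>
      tcod A (ft (hL A X i f) u) = fo (hL A X i f) (tcod X u)" using ht1 by simp
  show "\<forall>p\<in>Lo X. fl (hL A X i f) p \<in> Lo A \<and> lsrc A (fl (hL A X i f) p) = fo (hL A X i f) (lsrc X p) \<and>
      ltgt A (fl (hL A X i f) p) = fo (hL A X i f) (ltgt X p)" using hl1 hl_src by simp
  show "\<forall>c\<in>Ce X. fc (hL A X i f) c \<in> Ce A \<and> csrc A (fc (hL A X i f) c) = map (fl (hL A X i f)) (csrc X c) \<and>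
      ctgt A (fc (hL A X i f) c) = fl (hL A X i f) (ctgt X c) \<and> cleft A (fc (hL A X i f) c) = ft (hL A X i f) (cleft X c) \<and>
      cright A (fc (hL A X i f) c) = ft (hL A X i f) (cright X c)" using hc1 hc_bd by simp
  show "\<forall>x\<in>Ob X. ft (hL A X i f) (tid X x) = tid A (fo (hL A X i f) x)"
  proof
    fix x assume x: "x \<in> Ob X"
    then have t: "tid X x \<in> Tt X" "tdom X (tid X x) = x" "tcod X (tid X x) = x" using vdc_id[OF X x] by auto
    note o = ho1[OF x]
    have ti: "tid A (ho x) \<in> Tt A" "tdom A (tid A (ho x)) = ho x" "tcod A (tid A (ho x)) = ho x"
      using vdc_id[OF A] o by auto
    have "ft i (tid A (ho x)) = tid B (fo i (ho x))" using vdf_tid[OF iv] o by auto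
    moreover have "ft f (tid X x) = tid B (fo f x)" using vdf_tid[OF fv x] by auto
    ultimately have e: "ft i (ht (tid X x)) = ft i (tid A (ho x))" using ht1[OF t(1)] o by simp
    note H = ht1[OF t(1)]
    show "ft (hL A X i f) (tid X x) = tid A (fo (hL A X i f) x)" unfolding hL_simps
    proof (rule tinj)
      show "ht (tid X x) \<in> Tt A" using H by blast
      show "tid A (ho x) \<in> Tt A" by (rule ti(1))
      show "tdom A (ht (tid X x)) = tdom A (tid A (ho x))" using H t(2) ti(2) by simp
      show "tcod A (ht (tid X x)) = tcod A (tid A (ho x))" using H t(3) ti(3) by simp
    qed (rule e)
  qed
  show "\<forall>u\<in>Tt X. \<forall>v\<in>Tt X. tcod X u = tdom X v \<longrightarrow>
        ft (hL A X i f) (tcomp X v u) = tcomp A (ft (hL A X i f) v) (ft (hL A X i f) u)"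
  proof (intro ballI impI)
    fix u v assume u: "u \<in> Tt X" and v: "v \<in> Tt X" and uv: "tcod X u = tdom X v"
    have w: "tcomp X v u \<in> Tt X" "tdom X (tcomp X v u) = tdom X u" "tcod X (tcomp X v u) = tcod X v"
      using vdc_comp[OF X u v uv] by auto
    note hu = ht1[OF u] and hv = ht1[OF v] and hw = ht1[OF w(1)]
    have huv: "tcod A (ht u) = tdom A (ht v)" using hu hv uv by simp
    have c: "tcomp A (ht v) (ht u) \<in> Tt A" "tdom A (tcomp A (ht v) (ht u)) = tdom A (ht u)"
      "tcod A (tcomp A (ht v) (ht u)) = tcod A (ht v)"
      using vdc_comp[OF A _ _ huv] hu hv by auto
    have "ft i (tcomp A (ht v) (ht u)) = tcomp B (ft i (ht v)) (ft i (ht u))" using vdf_tcomp[OF iv _ _ huv] hu hv by auto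
    moreover have "ft f (tcomp X v u) = tcomp B (ft f v) (ft f u)" using vdf_tcomp[OF fv u v uv] by auto
    ultimately have e: "ft i (ht (tcomp X v u)) = ft i (tcomp A (ht v) (ht u))" using hu hv hw by simp
    show "ft (hL A X i f) (tcomp X v u) = tcomp A (ft (hL A X i f) v) (ft (hL A X i f) u)" unfolding hL_simps
    proof (rule tinj)
      show "ht (tcomp X v u) \<in> Tt A" using hw by blast
      show "tcomp A (ht v) (ht u) \<in> Tt A" by (rule c(1))
      show "tdom A (ht (tcomp X v u)) = tdom A (tcomp A (ht v) (ht u))" using hw w(2) c(2) hu by simp
      show "tcod A (ht (tcomp X v u)) = tcod A (tcomp A (ht v) (ht u))" using hw w(3) c(3) hv by simp
    qed (rule e)
  qed
  show "\<forall>p\<in>Lo X. fc (hL A X i f) (cid X p) = cid A (fl (hL A X i f) p)"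
  proof
    fix p assume p: "p \<in> Lo X"
    have cX: "cid X p \<in> Ce X" "csrc X (cid X p) = [p]" "ctgt X (cid X p) = p" "cleft X (cid X p) = tid X (lsrc X p)"
      "lsrc X p \<in> Ob X"
      using vdc_cid[OF X p] vdc_L[OF X p] by auto
    have "tdom X (tid X (lsrc X p)) = lsrc X p" using vdc_id[OF X cX(5)] by auto
    note hp = hl1[OF p] and hs = hl_src[OF p] and hcp = hc1[OF cX(1)]
    have cA: "cid A (hl p) \<in> Ce A" "csrc A (cid A (hl p)) = [hl p]" "ctgt A (cid A (hl p)) = hl p"
      "cleft A (cid A (hl p)) = tid A (lsrc A (hl p))" "lsrc A (hl p) \<in> Ob A"
      using vdc_cid[OF A] vdc_L[OF A] hp by auto
    have e1: "tdom A (tid A (lsrc A (hl p))) = lsrc A (hl p)" using vdc_id[OF A cA(5)] by auto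
    have e2: "fc i (cid A (hl p)) = cid B (fl i (hl p))" using vdf_cid[OF iv] hp by auto
    have e3: "fc f (cid X p) = cid B (fl f p)" using vdf_cid[OF fv p] by auto
    show "fc (hL A X i f) (cid X p) = cid A (fl (hL A X i f) p)" unfolding hL_simps
    proof (rule cinj)
      show "hc (cid X p) \<in> Ce A" using hcp by blast
      show "cid A (hl p) \<in> Ce A" by (rule cA(1))
      show "csrc A (hc (cid X p)) = csrc A (cid A (hl p))" using hcp cX(2) cA(2) by simp
      have "tdom A (cleft A (hc (cid X p))) = ho (lsrc X p)"
        using hcp cX(4) \<open>tdom X (tid X (lsrc X p)) = lsrc X p\<close> by simp
      moreover have "tdom A (cleft A (cid A (hl p))) = ho (lsrc X p)" using cA(4) e1 hs by simp
      ultimately show "tdom A (cleft A (hc (cid X p))) = tdom A (cleft A (cid A (hl p)))" by simp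
      show "ctgt A (hc (cid X p)) = ctgt A (cid A (hl p))" using hcp cX(3) cA(3) by simp
      show "fc i (hc (cid X p)) = fc i (cid A (hl p))" using hcp e2 e3 hp by simp
    qed
  qed
  show "\<forall>a u bs. composable X a u bs \<longrightarrow>
        fc (hL A X i f) (ccomp X a u bs) = ccomp A (fc (hL A X i f) a) (ft (hL A X i f) u) (map (fc (hL A X i f)) bs)"
  proof (intro allI impI)
    fix a u bs assume c: "composable X a u bs"
    have cA: "composable A (hc a) (ht u) (map hc bs)"
      using composable_pres[OF X pres_h c] by simp
    from c have a: "a \<in> Ce X" and cp: "cpath X u bs (pright X u bs)" by (auto simp: composable_def)
    from cpath_in[OF X cp] have uT: "u \<in> Tt X" and bs: "set bs \<subseteq> Ce X" by auto
    have cX: "ccomp X a u bs \<in> Ce X" "csrc X (ccomp X a u bs) = concat (map (csrc X) bs)"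
      "ctgt X (ccomp X a u bs) = ctgt X a" "cleft X (ccomp X a u bs) = tcomp X (cleft X a) u"
      using vdc_cc[OF X c] by auto
    have cA2: "ccomp A (hc a) (ht u) (map hc bs) \<in> Ce A" "csrc A (ccomp A (hc a) (ht u) (map hc bs)) = concat (map (csrc A) (map hc bs))"
      "ctgt A (ccomp A (hc a) (ht u) (map hc bs)) = ctgt A (hc a)"
      "cleft A (ccomp A (hc a) (ht u) (map hc bs)) = tcomp A (cleft A (hc a)) (ht u)"
      using vdc_cc[OF A cA] by auto
    have d1: "tdom X (tcomp X (cleft X a) u) = tdom X u" by (rule vdc_tdom_comp[OF X c])
    have d2: "tdom A (tcomp A (cleft A (hc a)) (ht u)) = tdom A (ht u)" by (rule vdc_tdom_comp[OF A cA])
    have s: "concat (map (csrc A) (map hc bs)) = map hl (concat (map (csrc X) bs))"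
    proof -
      have s1: "\<And>x. x \<in> set bs \<Longrightarrow> csrc A (hc x) = map hl (csrc X x)" using bs hc1 by blast
      show ?thesis by (simp add: map_concat s1 cong: map_cong)
    qed
    have "fc i (ccomp A (hc a) (ht u) (map hc bs)) = ccomp B (fc i (hc a)) (ft i (ht u)) (map (fc i) (map hc bs))"
      using vdf_cc[OF iv cA] by auto
    also have "\<dots> = ccomp B (fc f a) (ft f u) (map (fc f) bs)"
    proof -
      have s2: "\<And>x. x \<in> set bs \<Longrightarrow> fc i (hc x) = fc f x" using bs hc1 by blast
      show ?thesis using hc1[OF a] ht1[OF uT] by (simp add: s2 cong: map_cong)
    qed
    also have "\<dots> = fc f (ccomp X a u bs)" using vdf_cc[OF fv c] by auto
    finally have e: "fc i (ccomp A (hc a) (ht u) (map hc bs)) = fc f (ccomp X a u bs)" .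
    show "fc (hL A X i f) (ccomp X a u bs) = ccomp A (fc (hL A X i f) a) (ft (hL A X i f) u) (map (fc (hL A X i f)) bs)"
    proof -
      note H = hc1[OF cX(1)]
      show ?thesis unfolding hL_simps
      proof (rule cinj)
        show "hc (ccomp X a u bs) \<in> Ce A" using H by blast
        show "ccomp A (hc a) (ht u) (map hc bs) \<in> Ce A" by (rule cA2(1))
        show "csrc A (hc (ccomp X a u bs)) = csrc A (ccomp A (hc a) (ht u) (map hc bs))"
          using H cX(2) cA2(2) s by simp
        have "tdom A (cleft A (hc (ccomp X a u bs))) = ho (tdom X u)" using H cX(4) d1 by simp
        moreover have "tdom A (cleft A (ccomp A (hc a) (ht u) (map hc bs))) = ho (tdom X u)"
          using cA2(4) d2 ht1[OF uT] by simp
        ultimately show "tdom A (cleft A (hc (ccomp X a u bs))) = tdom A (cleft A (ccomp A (hc a) (ht u) (map hc bs)))"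
          by simp
        show "ctgt A (hc (ccomp X a u bs)) = ctgt A (ccomp A (hc a) (ht u) (map hc bs))"
          using H cX(3) cA2(3) hc1[OF a] by simp
        show "fc i (hc (ccomp X a u bs)) = fc i (ccomp A (hc a) (ht u) (map hc bs))"
          using H e by simp
      qed
    qed
  qed
qed

lemma h_eq: "vdf_eq X (vdf_comp i (hL A X i f)) f"
  unfolding vdf_eq_def vdf_comp_def using ho1 ht1 hl1 hc1 by simp

lemma h_uniq:
  assumes hv: "is_vdf X A h'" and he: "vdf_eq X (vdf_comp i h') f"
  shows "vdf_eq X (hL A X i f) h'"
proof -
  have P: "pres X A h'" by (rule vdf_pres[OF hv])
  from he have e: "\<And>x. x \<in> Ob X \<Longrightarrow> fo i (fo h' x) = fo f x" "\<And>u. u \<in> Tt X \<Longrightarrow> ft i (ft h' u) = ft f u"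
    "\<And>p. p \<in> Lo X \<Longrightarrow> fl i (fl h' p) = fl f p" "\<And>c. c \<in> Ce X \<Longrightarrow> fc i (fc h' c) = fc f c"
    unfolding vdf_eq_def vdf_comp_def by simp_all
  have Po: "\<And>x. x \<in> Ob X \<Longrightarrow> fo h' x \<in> Ob A" using P unfolding pres_def by blast
  have Pt: "\<And>u. u \<in> Tt X \<Longrightarrow> ft h' u \<in> Tt A \<and> tdom A (ft h' u) = fo h' (tdom X u) \<and> tcod A (ft h' u) = fo h' (tcod X u)"
    using P unfolding pres_def by blast
  have Pl: "\<And>p. p \<in> Lo X \<Longrightarrow> fl h' p \<in> Lo A" using P unfolding pres_def by blast
  have Pc: "\<And>c. c \<in> Ce X \<Longrightarrow> fc h' c \<in> Ce A \<and> csrc A (fc h' c) = map (fl h') (csrc X c) \<and>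
        ctgt A (fc h' c) = fl h' (ctgt X c) \<and> cleft A (fc h' c) = ft h' (cleft X c)"
    using P unfolding pres_def by blast
  have O: "\<And>x. x \<in> Ob X \<Longrightarrow> ho x = fo h' x"
  proof -
    fix x assume x: "x \<in> Ob X"
    show "ho x = fo h' x" using oinj[of "ho x" "fo h' x"] ho1[OF x] Po[OF x] e(1)[OF x] by simp
  qed
  have L: "\<And>p. p \<in> Lo X \<Longrightarrow> hl p = fl h' p"
  proof -
    fix p assume p: "p \<in> Lo X"
    show "hl p = fl h' p" using linj[of "hl p" "fl h' p"] hl1[OF p] Pl[OF p] e(3)[OF p] by simp
  qed
  have T: "\<And>u. u \<in> Tt X \<Longrightarrow> ht u = ft h' u"
  proof -
    fix u assume u: "u \<in> Tt X"
    have o: "tdom X u \<in> Ob X" "tcod X u \<in> Ob X" using vdc_T[OF X u] by auto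
    show "ht u = ft h' u"
    proof (rule tinj)
      show "ht u \<in> Tt A" using ht1[OF u] by blast
      show "ft h' u \<in> Tt A" using Pt[OF u] by blast
      show "tdom A (ht u) = tdom A (ft h' u)" using ht1[OF u] Pt[OF u] O[OF o(1)] by simp
      show "tcod A (ht u) = tcod A (ft h' u)" using ht1[OF u] Pt[OF u] O[OF o(2)] by simp
      show "ft i (ht u) = ft i (ft h' u)" using ht1[OF u] e(2)[OF u] by simp
    qed
  qed
  have Cc: "\<And>c. c \<in> Ce X \<Longrightarrow> hc c = fc h' c"
  proof -
    fix c assume c: "c \<in> Ce X"
    have cX: "cleft X c \<in> Tt X" "ctgt X c \<in> Lo X"
      and lp: "lpath X (tdom X (cleft X c)) (csrc X c) (tdom X (cright X c))"
      using vdc_C[OF X c] by auto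
    from lpath_in[OF X lp] have src: "set (csrc X c) \<subseteq> Lo X" and o: "tdom X (cleft X c) \<in> Ob X" by auto
    note H = hc1[OF c] and G = Pc[OF c]
    show "hc c = fc h' c"
    proof (rule cinj)
      show "hc c \<in> Ce A" using H by blast
      show "fc h' c \<in> Ce A" using G by blast
      have "map hl (csrc X c) = map (fl h') (csrc X c)" using src L by (auto intro: map_cong)
      then show "csrc A (hc c) = csrc A (fc h' c)" using H G by simp
      show "tdom A (cleft A (hc c)) = tdom A (cleft A (fc h' c))" using H G Pt[OF cX(1)] O[OF o] by simp
      show "ctgt A (hc c) = ctgt A (fc h' c)" using H G L[OF cX(2)] by simp
      show "fc i (hc c) = fc i (fc h' c)" using H e(4)[OF c] by simp
    qed
  qed
  show ?thesis unfolding vdf_eq_def using O T L Cc by simp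
qed

lemma lift_exists: "\<exists>h. is_vdf X A h \<and> vdf_eq X (vdf_comp i h) f \<and>
            (\<forall>h'. is_vdf X A h' \<longrightarrow> vdf_eq X (vdf_comp i h') f \<longrightarrow> vdf_eq X h h')"
  using vdf_h h_eq h_uniq by blast

end

lemma roK_im: "a \<in> Ob A \<Longrightarrow> roK A i k (fo i a) = {[Inl (fo i a), N 0]}"
  by (simp add: roK_def)

lemma rlK_im: "is_vdf A B i \<Longrightarrow> p \<in> Lo A \<Longrightarrow> rlK A B i k (fl i p) =
   pr3 {[Inl (fo i (lsrc A p)), N 0]} {[Inl (fo i (ltgt A p)), N 0]} {[Inr (Inr (Inl (fl i p))), N 0]}"
proof -
  assume iv: "is_vdf A B i" and p: "p \<in> Lo A"
  have A: "is_vdc A" using vdf_vdc[OF iv] by blast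
  have "fl i p \<in> Lo B \<and> lsrc B (fl i p) = fo i (lsrc A p) \<and> ltgt B (fl i p) = fo i (ltgt A p)"
    using vdf_pres[OF iv] p unfolding pres_def by blast
  moreover have "lsrc A p \<in> Ob A" "ltgt A p \<in> Ob A" using vdc_L[OF A p] by auto
  ultimately show ?thesis using p by (simp add: rlK_def roK_def)
qed

lemma rK_agree: assumes iv: "is_vdf A B i"
  shows "vdf_eq A (vdf_comp (rK A B i 1) i) (vdf_comp (rK A B i 2) i)"
proof -
  have A: "is_vdc A" using vdf_vdc[OF iv] by blast
  have P: "pres A B i" by (rule vdf_pres[OF iv])
  have Pt: "\<And>u. u \<in> Tt A \<Longrightarrow> tdom B (ft i u) = fo i (tdom A u) \<and> tcod B (ft i u) = fo i (tcod A u)"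
    using P unfolding pres_def by blast
  have Pc: "\<And>c. c \<in> Ce A \<Longrightarrow> csrc B (fc i c) = map (fl i) (csrc A c) \<and>
        ctgt B (fc i c) = fl i (ctgt A c) \<and> cleft B (fc i c) = ft i (cleft A c)"
    using P unfolding pres_def by blast
  have t: "\<And>u. u \<in> Tt A \<Longrightarrow> ft (rK A B i 1) (ft i u) = ft (rK A B i 2) (ft i u)"
  proof -
    fix u assume u: "u \<in> Tt A"
    have o: "tdom A u \<in> Ob A" "tcod A u \<in> Ob A" using vdc_T[OF A u] by auto
    show "ft (rK A B i 1) (ft i u) = ft (rK A B i 2) (ft i u)"
      using Pt[OF u] o by (simp add: roK_def)
  qed
  have c: "\<And>c. c \<in> Ce A \<Longrightarrow> fc (rK A B i 1) (fc i c) = fc (rK A B i 2) (fc i c)"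
  proof -
    fix c assume c: "c \<in> Ce A"
    have cA: "cleft A c \<in> Tt A" "ctgt A c \<in> Lo A"
      and lp: "lpath A (tdom A (cleft A c)) (csrc A c) (tdom A (cright A c))"
      using vdc_C[OF A c] by auto
    from lpath_in[OF A lp] have src: "set (csrc A c) \<subseteq> Lo A" and o: "tdom A (cleft A c) \<in> Ob A" by auto
    have m: "map (rlK A B i 1) (csrc B (fc i c)) = map (rlK A B i 2) (csrc B (fc i c))"
      using Pc[OF c] src rlK_im[OF iv] by (auto simp: subset_iff)
    have t: "rlK A B i 1 (ctgt B (fc i c)) = rlK A B i 2 (ctgt B (fc i c))"
      using Pc[OF c] rlK_im[OF iv cA(2)] by simp
    have o2: "roK A i 1 (tdom B (cleft B (fc i c))) = roK A i 2 (tdom B (cleft B (fc i c)))"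
      using Pc[OF c] Pt[OF cA(1)] o by (simp add: roK_def)
    show "fc (rK A B i 1) (fc i c) = fc (rK A B i 2) (fc i c)"
      by (simp only: rK_simps m t o2)
  qed
  show ?thesis unfolding vdf_eq_def vdf_comp_def using rlK_im[OF iv] t c by (simp add: roK_def)
qed

lemma roK_sep: "roK A i 1 b = roK A i 2 b \<Longrightarrow> b \<in> fo i ` Ob A"
  by (auto simp: roK_def split: if_splits)

lemma rlK_sep: "rlK A B i 1 p = rlK A B i 2 p \<Longrightarrow> p \<in> fl i ` Lo A"
proof -
  assume "rlK A B i 1 p = rlK A B i 2 p"
  then have "ut 2 (rlK A B i 1 p) = ut 2 (rlK A B i 2 p)" by simp
  then show ?thesis by (auto simp: rlK_def split: if_splits)
qed

theorem lemma5p16: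
  fixes A :: "('ao, 'at, 'al, 'ac) vdc"
    and B :: "('bo, 'bt, 'bl, 'bc) vdc"
    and i :: "('ao, 'at, 'al, 'ac, 'bo, 'bt, 'bl, 'bc) vdf"
    and C :: "('co, 'ct, 'cl, 'cc) vdc"
    and q1 q2 :: "('bo, 'bt, 'bl, 'bc, 'co, 'ct, 'cl, 'cc) vdf"
  assumes "is_vdf A B i"
    and "fully_faithful A B i"
    and "inj_on_objects A i"
    and "inj_on_loose A i"
    and "is_cokernel_pair A B i C q1 q2"
  shows "vdf_eq A (vdf_comp q1 i) (vdf_comp q2 i) \<and>
         (\<forall>X :: ('xo, 'xt, 'xl, 'xc) vdc. is_vdc X \<longrightarrow> equalizer_test A B i q1 q2 X)"
proof
  note iv = assms(1) and cok = assms(5)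
  have B: "is_vdc B" using vdf_vdc[OF iv] by blast
  from cok show eq: "vdf_eq A (vdf_comp q1 i) (vdf_comp q2 i)"
    unfolding is_cokernel_pair_def by (elim conjE)
  have U: "\<forall>(D :: (('bo, 'bt, 'bl, 'bc) univ, ('bo, 'bt, 'bl, 'bc) univ,
              ('bo, 'bt, 'bl, 'bc) univ, ('bo, 'bt, 'bl, 'bc) univ) vdc) r1 r2.
        is_vdf B D r1 \<longrightarrow> is_vdf B D r2 \<longrightarrow> vdf_eq A (vdf_comp r1 i) (vdf_comp r2 i) \<longrightarrow>
        (\<exists>h. is_vdf C D h \<and> vdf_eq B (vdf_comp h q1) r1 \<and> vdf_eq B (vdf_comp h q2) r2 \<and>
             (\<forall>h'. is_vdf C D h' \<longrightarrow> vdf_eq B (vdf_comp h' q1) r1 \<longrightarrow>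
                   vdf_eq B (vdf_comp h' q2) r2 \<longrightarrow> vdf_eq C h h'))"
    using cok unfolding is_cokernel_pair_def by (elim conjE)
  from U[rule_format, OF is_vdf_rK[OF B] is_vdf_rK[OF B] rK_agree[OF iv]]
  obtain hD where h1: "vdf_eq B (vdf_comp hD q1) (rK A B i 1)" and h2: "vdf_eq B (vdf_comp hD q2) (rK A B i 2)"
    by blast
  have sepO: "\<And>b. b \<in> Ob B \<Longrightarrow> fo q1 b = fo q2 b \<Longrightarrow> b \<in> fo i ` Ob A"
  proof -
    fix b assume b: "b \<in> Ob B" and e: "fo q1 b = fo q2 b"
    have "roK A i 1 b = fo hD (fo q1 b)" using h1 b unfolding vdf_eq_def vdf_comp_def by simp
    also have "\<dots> = fo hD (fo q2 b)" using e by simp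
    also have "\<dots> = roK A i 2 b" using h2 b unfolding vdf_eq_def vdf_comp_def by simp
    finally show "b \<in> fo i ` Ob A" by (rule roK_sep)
  qed
  have sepL: "\<And>p. p \<in> Lo B \<Longrightarrow> fl q1 p = fl q2 p \<Longrightarrow> p \<in> fl i ` Lo A"
  proof -
    fix p assume p: "p \<in> Lo B" and e: "fl q1 p = fl q2 p"
    have "rlK A B i 1 p = fl hD (fl q1 p)" using h1 p unfolding vdf_eq_def vdf_comp_def by simp
    also have "\<dots> = fl hD (fl q2 p)" using e by simp
    also have "\<dots> = rlK A B i 2 p" using h2 p unfolding vdf_eq_def vdf_comp_def by simp
    finally show "p \<in> fl i ` Lo A" by (rule rlK_sep)
  qed
  show "\<forall>X :: ('xo, 'xt, 'xl, 'xc) vdc. is_vdc X \<longrightarrow> equalizer_test A B i q1 q2 X"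
    unfolding equalizer_test_def
  proof (intro allI impI)
    fix X :: "('xo, 'xt, 'xl, 'xc) vdc" and f
    assume X: "is_vdc X" and fv: "is_vdf X B f" and fe: "vdf_eq X (vdf_comp q1 f) (vdf_comp q2 f)"
    have Pf: "pres X B f" by (rule vdf_pres[OF fv])
    have obim: "\<forall>x\<in>Ob X. fo f x \<in> fo i ` Ob A"
    proof
      fix x assume x: "x \<in> Ob X"
      have "fo f x \<in> Ob B" using Pf x unfolding pres_def by blast
      moreover have "fo q1 (fo f x) = fo q2 (fo f x)" using fe x unfolding vdf_eq_def vdf_comp_def by simp
      ultimately show "fo f x \<in> fo i ` Ob A" by (rule sepO)
    qed
    have loim: "\<forall>p\<in>Lo X. fl f p \<in> fl i ` Lo A"
    proof
      fix p assume p: "p \<in> Lo X"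
      have "fl f p \<in> Lo B" using Pf p unfolding pres_def by blast
      moreover have "fl q1 (fl f p) = fl q2 (fl f p)" using fe p unfolding vdf_eq_def vdf_comp_def by simp
      ultimately show "fl f p \<in> fl i ` Lo A" by (rule sepL)
    qed
    interpret LC A B i X f
      by (unfold_locales) (use assms(1-4) fv obim loim in auto)
    show "\<exists>h. is_vdf X A h \<and> vdf_eq X (vdf_comp i h) f \<and>
            (\<forall>h'. is_vdf X A h' \<longrightarrow> vdf_eq X (vdf_comp i h') f \<longrightarrow> vdf_eq X h h')"
      by (rule lift_exists)
  qed
qed

end
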